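(* Let $M$ be a monoid, $\phi:M\to M$ an endomorphism, and $z\in M$ such that the elements $z\phi^n$ ($n\in\mathbb{N}\cup\{0\}$) are pairwise distinct. Let $\beta,\beta',\delta,\delta'\in\mathbb{N}\cup\{0\}$. Then there exist $\alpha,\alpha',\gamma,\gamma'\in\mathbb{N}\cup\{0\}$ such that $c^\gamma b^\beta z c^\delta b^\alpha = c^{\gamma'} b^{\beta'} z c^{\delta'} b^{\alpha'}$ in $\mathrm{BR}(M,\phi)$ if and only if $\max\{\beta,\delta\}=\max\{\beta',\delta'\}$.
   Context: If $M$ has monoid presentation $\langle A\mid \mathcal{R}\rangle$ ($A$ possibly infinite) and $\phi$ is an endomorphism of $M$ (maps written on the right), the Bruck--Reilly extension $\mathrm{BR}(M,\phi)$ is the monoid presented by $\langle A,b,c\mid \mathcal{R},\ bc=1,\ ba=(a\phi)b,\ ac=c(a\phi)\ (a\in A)\rangle$ (with $a\phi$ written as a word over $A$); it does not depend on the choice of presentation, and $M$ embeds in it. *)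

theory Defs
  imports Main
begin

text \<open>Generators of the Bruck--Reilly extension BR(M,phi): we present M by the
  presentation with generating set A = M (all elements) and its multiplication
  table as relations, and add the two extra generators b and c.\<close>

datatype 'a br_gen = G 'a | B | C

inductive br_cong :: "('a::monoid_mult \<Rightarrow> 'a) \<Rightarrow> 'a br_gen list \<Rightarrow> 'a br_gen list \<Rightarrow> bool"
  for phi :: "'a::monoid_mult \<Rightarrow> 'a" where
  refl: "br_cong phi w w"
| sym: "br_cong phi u v \<Longrightarrow> br_cong phi v u"
| trans: "br_cong phi u v \<Longrightarrow> br_cong phi v w \<Longrightarrow> br_cong phi u w"
| ctx: "br_cong phi u v \<Longrightarrow> br_cong phi (x @ u @ y) (x @ v @ y)"
| mult: "br_cong phi [G a, G a'] [G (a * a')]"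
| one: "br_cong phi [G 1] []"
| bc: "br_cong phi [B, C] []"
| ba: "br_cong phi [B, G a] [G (phi a), B]"
| ac: "br_cong phi [G a, C] [C, G (phi a)]"

definition monoid_endo :: "('a::monoid_mult \<Rightarrow> 'a) \<Rightarrow> bool" where
  "monoid_endo phi \<longleftrightarrow> phi 1 = 1 \<and> (\<forall>x y. phi (x * y) = phi x * phi y)"

definition br_word :: "nat \<Rightarrow> nat \<Rightarrow> 'a \<Rightarrow> nat \<Rightarrow> nat \<Rightarrow> 'a br_gen list" where
  "br_word g be z d a = replicate g C @ replicate be B @ [G z] @ replicate d C @ replicate a B"

end

theory Submission
  imports Defs
begin

fun stp :: "('a::monoid_mult \<Rightarrow> 'a) \<Rightarrow> 'a br_gen \<Rightarrow> nat \<times> 'a \<times> nat \<Rightarrow> nat \<times> 'a \<times> nat" where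
  "stp phi (G g) (m,a,n) = (m, a * (phi^^n) g, n)"
| "stp phi B (m,a,n) = (m,a,Suc n)"
| "stp phi C (m,a,n) = (if n = 0 then (Suc m, phi a, 0) else (m,a,n-1))"

definition run :: "('a::monoid_mult \<Rightarrow> 'a) \<Rightarrow> 'a br_gen list \<Rightarrow> nat \<times> 'a \<times> nat \<Rightarrow> nat \<times> 'a \<times> nat" where
  "run phi w s = fold (stp phi) w s"

definition nf :: "nat \<times> 'a \<times> nat \<Rightarrow> 'a br_gen list" where
  "nf s = (case s of (m,a,n) \<Rightarrow> replicate m C @ [G a] @ replicate n B)"

lemma pow_hom:
  assumes "monoid_endo phi"
  shows "(phi^^n) (x*y) = (phi^^n) x * (phi^^n) y \<and> (phi^^n) 1 = 1"
  using assms by (induction n) (auto simp: monoid_endo_def)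

lemma run_append: "run phi (u @ v) s = run phi v (run phi u s)"
  by (simp add: run_def)

lemma sound:
  assumes "br_cong phi u v" "monoid_endo phi"
  shows "run phi u s = run phi v s"
  using assms(1)
proof (induction arbitrary: s rule: br_cong.induct)
  case (ctx u v x y)
  then show ?case by (simp add: run_append)
next
  case (mult a a')
  obtain m b n where s: "s = (m,b,n)" by (cases s) auto
  show ?case using pow_hom[OF assms(2)] by (simp add: run_def s mult.assoc)
next
  case one
  obtain m b n where s: "s = (m,b,n)" by (cases s) auto
  show ?case using pow_hom[OF assms(2)] by (simp add: run_def s)
next
  case bc
  obtain m b n where s: "s = (m,b,n)" by (cases s) auto
  show ?case by (simp add: run_def s)
next
  case (ba a)
  obtain m b n where s: "s = (m,b,n)" by (cases s) auto
  show ?case by (simp add: run_def s funpow_swap1)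
next
  case (ac a)
  obtain m b n where s: "s = (m,b,n)" by (cases s) auto
  show ?case
  proof (cases n)
    case 0 then show ?thesis using pow_hom[of phi 1] assms(2) by (simp add: run_def s)
  next
    case (Suc k) then show ?thesis by (simp add: run_def s funpow_swap1)
  qed
qed auto

lemma ctxL: "br_cong phi u v \<Longrightarrow> br_cong phi (x @ u) (x @ v)"
  using br_cong.ctx[of phi u v x "[]"] by simp
lemma ctxR: "br_cong phi u v \<Longrightarrow> br_cong phi (u @ y) (v @ y)"
  using br_cong.ctx[of phi u v "[]" y] by simp

lemma Bpow_G: "br_cong phi (replicate n B @ [G x]) ([G ((phi^^n) x)] @ replicate n B)"
proof (induction n arbitrary: x)
  case 0 then show ?case by (simp add: br_cong.refl)
next
  case (Suc n)
  have "replicate (Suc n) B @ [G x] = [B] @ (replicate n B @ [G x])" by simp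
  moreover have "br_cong phi ([B] @ (replicate n B @ [G x])) ([B] @ ([G ((phi^^n) x)] @ replicate n B))"
    by (rule ctxL[OF Suc])
  moreover have "br_cong phi ([B, G ((phi^^n) x)] @ replicate n B) ([G (phi ((phi^^n) x)), B] @ replicate n B)"
    by (rule ctxR[OF br_cong.ba])
  ultimately show ?case
    by (simp add: funpow_swap1 replicate_append_same[symmetric])
       (metis (no_types, lifting) append_Cons append_Nil br_cong.trans replicate_app_Cons_same)
qed

lemma step_nf: "br_cong phi (nf s @ [g]) (nf (stp phi g s))"
proof -
  obtain m a n where s: "s = (m,a,n)" by (cases s) auto
  show ?thesis
  proof (cases g)
    case (G x)
    have 1: "br_cong phi ((replicate m C @ [G a]) @ (replicate n B @ [G x]))
               ((replicate m C @ [G a]) @ ([G ((phi^^n) x)] @ replicate n B))"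
      by (rule ctxL[OF Bpow_G])
    have 2: "br_cong phi (replicate m C @ [G a, G ((phi^^n) x)] @ replicate n B)
               (replicate m C @ [G (a * (phi^^n) x)] @ replicate n B)"
      by (rule br_cong.ctx[OF br_cong.mult])
    show ?thesis using br_cong.trans[OF 1] 2 by (simp add: s nf_def G)
  next
    case B then show ?thesis
      by (simp add: s nf_def replicate_append_same[symmetric] br_cong.refl)
  next
    case C
    show ?thesis
    proof (cases n)
      case 0
      have "br_cong phi (replicate m C @ [G a, C] @ []) (replicate m C @ [C, G (phi a)] @ [])"
        by (rule br_cong.ctx[OF br_cong.ac])
      then show ?thesis by (simp add: s nf_def C 0 replicate_append_same[symmetric])
    next
      case (Suc k)
      have "br_cong phi ((replicate m C @ [G a] @ replicate k B) @ [B, C] @ []) 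
              ((replicate m C @ [G a] @ replicate k B) @ [] @ [])"
        by (rule br_cong.ctx[OF br_cong.bc])
      then show ?thesis by (simp add: s nf_def C Suc replicate_append_same[symmetric])
    qed
  qed
qed

lemma complete: "br_cong phi (nf s @ w) (nf (run phi w s))"
proof (induction w arbitrary: s)
  case Nil then show ?case by (simp add: run_def br_cong.refl)
next
  case (Cons g w)
  have 1: "br_cong phi ((nf s @ [g]) @ w) (nf (stp phi g s) @ w)" by (rule ctxR[OF step_nf])
  have 2: "run phi (g # w) s = run phi w (stp phi g s)" by (simp add: run_def)
  have "br_cong phi ((nf s @ [g]) @ w) (nf (run phi w (stp phi g s)))"
    by (rule br_cong.trans[OF 1 Cons])
  then show ?case using 2 by simp
qed

lemma to_nf: "br_cong phi w (nf (run phi w (0,1,0)))"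
proof -
  have "br_cong phi ([G 1] @ w) ([] @ w)" by (rule ctxR[OF br_cong.one])
  then have "br_cong phi w (nf (0,1,0) @ w)" by (simp add: nf_def br_cong.sym)
  then show ?thesis using complete by (metis br_cong.trans)
qed

lemma run_Cs: "run phi (replicate k C) (m,a,n) =
   (if k \<le> n then (m,a,n-k) else (m+k-n, (phi^^(k-n)) a, 0))"
proof (induction k arbitrary: m a n)
  case 0 then show ?case by (simp add: run_def)
next
  case (Suc k)
  have "run phi (replicate (Suc k) C) (m,a,n) = run phi (replicate k C) (stp phi C (m,a,n))"
    by (simp add: run_def)
  then show ?case using Suc by (cases n) (auto simp: funpow_swap1)
qed

lemma run_Bs: "run phi (replicate k B) (m,a,n) = (m,a,n+k)"
  by (induction k arbitrary: n) (auto simp: run_def)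

lemma run_word:
  assumes "monoid_endo phi"
  shows "run phi (br_word g be z d al) (0,1,0) =
     (g + max be d - be, (phi^^(max be d)) z, max be d - d + al)"
proof -
  have p1: "(phi^^g) 1 = 1" using pow_hom[OF assms] by blast
  have r1: "run phi (replicate g C) (0,1,0) = (g,1,0)" using p1 by (simp add: run_Cs)
  have r2: "run phi (replicate be B) (g,1,0) = (g,1,be)" by (simp add: run_Bs)
  have r3: "run phi [G z] (g,1,be) = (g, (phi^^be) z, be)" by (simp add: run_def)
  have r4: "run phi (replicate d C) (g, (phi^^be) z, be) = (g + max be d - be, (phi^^(max be d)) z, max be d - d)"
  proof (cases "d \<le> be")
    case True then show ?thesis by (simp add: run_Cs max_def)
  next
    case False
    have "(phi^^(d-be)) ((phi^^be) z) = (phi^^d) z"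
    proof -
      have "d = (d - be) + be" using False by simp
      then have "(phi^^d) z = (phi^^(d-be) \<circ> phi^^be) z" by (metis funpow_add)
      then show ?thesis by simp
    qed
    then show ?thesis using False by (simp add: run_Cs max_def)
  qed
  have r5: "run phi (replicate al B) (g + max be d - be, (phi^^(max be d)) z, max be d - d)
     = (g + max be d - be, (phi^^(max be d)) z, max be d - d + al)" by (simp add: run_Bs)
  show ?thesis unfolding br_word_def run_append r1 r2 r3 r4 r5 ..
qed

theorem mainTheorem14:
  fixes phi :: "'a::monoid_mult \<Rightarrow> 'a" and z :: 'a
    and \<beta> \<beta>' \<delta> \<delta>' :: nat
  assumes "monoid_endo phi"
    and "inj (\<lambda>n::nat. (phi ^^ n) z)"
  shows "(\<exists>\<alpha> \<alpha>' \<gamma> \<gamma>' :: nat.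
            br_cong phi (br_word \<gamma> \<beta> z \<delta> \<alpha>) (br_word \<gamma>' \<beta>' z \<delta>' \<alpha>'))
         \<longleftrightarrow> max \<beta> \<delta> = max \<beta>' \<delta>'"
proof
  assume "\<exists>\<alpha> \<alpha>' \<gamma> \<gamma>' :: nat.
            br_cong phi (br_word \<gamma> \<beta> z \<delta> \<alpha>) (br_word \<gamma>' \<beta>' z \<delta>' \<alpha>')"
  then obtain al al' g g' where h: "br_cong phi (br_word g \<beta> z \<delta> al) (br_word g' \<beta>' z \<delta>' al')"
    by blast
  have "run phi (br_word g \<beta> z \<delta> al) (0,1,0) = run phi (br_word g' \<beta>' z \<delta>' al') (0,1,0)"
    by (rule sound[OF h assms(1)])
  then have "(phi^^(max \<beta> \<delta>)) z = (phi^^(max \<beta>' \<delta>')) z"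
    by (simp add: run_word[OF assms(1)])
  then show "max \<beta> \<delta> = max \<beta>' \<delta>'" using assms(2) by (meson injD)
next
  assume e: "max \<beta> \<delta> = max \<beta>' \<delta>'"
  have "run phi (br_word \<beta> \<beta> z \<delta> \<delta>) (0,1,0) = run phi (br_word \<beta>' \<beta>' z \<delta>' \<delta>') (0,1,0)"
    using e by (simp add: run_word[OF assms(1)])
  then have "br_cong phi (br_word \<beta> \<beta> z \<delta> \<delta>) (br_word \<beta>' \<beta>' z \<delta>' \<delta>')"
    using to_nf[of phi "br_word \<beta> \<beta> z \<delta> \<delta>"] to_nf[of phi "br_word \<beta>' \<beta>' z \<delta>' \<delta>'"]
    by (metis br_cong.sym br_cong.trans)
  then show "\<exists>\<alpha> \<alpha>' \<gamma> \<gamma>' :: nat.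
            br_cong phi (br_word \<gamma> \<beta> z \<delta> \<alpha>) (br_word \<gamma>' \<beta>' z \<delta>' \<alpha>')" by blast
qed

end
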